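(* Let $d\ge3$ be an integer and $\nu>0$. Let $(\hat Z_t)_{t\ge0}$ be the continuous-time Markov chain on $\mathbb N_0\cup\{\dagger\}$ with transition rates $\hat r(i,i+1)=2\frac{d-1}{d}$ for $i\ge1$, $\hat r(i,i-1)=\frac2d$ for $i\ge1$, $\hat r(0,1)=2$, $\hat r(i,\dagger)=\nu i$ for $i\in\mathbb N_0$, and all other rates zero (so $\dagger$ is absorbing). Define the collision local time $$R_{d,\nu}(i)=\mathsf E\Big[\int_0^\infty\mathbf 1_{\{\hat Z_t=0\}}\,{\rm d}t\ \Big|\ \hat Z_0=i\Big].$$ Then $R_{d,\nu}(0)=\dfrac{1}{2\vartheta_{d,\nu}}$.
   Context: $\beta_d=\sqrt{d-1}$, $\rho_d=2\sqrt{d-1}/d$; $\Delta_{d,\nu}$ is the continued fraction $\Delta_{d,\nu}=\cfrac{1}{a_1-\cfrac{1}{a_2-\cfrac{1}{a_3-\cdots}}}$ with $a_i=\frac{2+i\nu}{\rho_d}$; and $\vartheta_{d,\nu}=1-\Delta_{d,\nu}/\beta_d$. (The chain $\hat Z$ models the distance of two independent rate-1 random walks on the infinite $d$-regular tree whose connecting path's edges each disappear at rate $\nu$, $\dagger$ representing disconnection.) *)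

theory Defs
  imports "HOL-Analysis.Analysis"
begin

definition beta_d :: "nat \<Rightarrow> real" where
  "beta_d d = sqrt (real d - 1)"

definition rho_d :: "nat \<Rightarrow> real" where
  "rho_d d = 2 * sqrt (real d - 1) / real d"

fun cf_trunc :: "(nat \<Rightarrow> real) \<Rightarrow> nat \<Rightarrow> nat \<Rightarrow> real" where
  "cf_trunc a k 0 = 0"
| "cf_trunc a k (Suc n) = 1 / (a k - cf_trunc a (Suc k) n)"

definition Delta :: "nat \<Rightarrow> real \<Rightarrow> real" where
  "Delta d \<nu> = lim (\<lambda>n. cf_trunc (\<lambda>i. (2 + real i * \<nu>) / rho_d d) 1 n)"

definition vartheta :: "nat \<Rightarrow> real \<Rightarrow> real" where
  "vartheta d \<nu> = 1 - Delta d \<nu> / beta_d d"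

definition exit_rate :: "('s \<Rightarrow> 's \<Rightarrow> real) \<Rightarrow> 's \<Rightarrow> real" where
  "exit_rate q x = enn2real (\<integral>\<^sup>+ z. ennreal (q x z) \<partial>count_space (UNIV - {x}))"

text \<open>Iterates of the backward Kolmogorov integral equation (Feller's construction);
  P_iter q n t x y is the probability to be at y at time t, started at x,
  having made at most n jumps.\<close>
fun P_iter :: "('s \<Rightarrow> 's \<Rightarrow> real) \<Rightarrow> nat \<Rightarrow> real \<Rightarrow> 's \<Rightarrow> 's \<Rightarrow> ennreal" where
  "P_iter q 0 t x y = (if x = y then ennreal (exp (- exit_rate q x * t)) else 0)"
| "P_iter q (Suc n) t x y =
     (if x = y then ennreal (exp (- exit_rate q x * t)) else 0)
     + (\<integral>\<^sup>+ s \<in> {0..t}. ennreal (exp (- exit_rate q x * s)) *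
          (\<integral>\<^sup>+ z. ennreal (q x z) * P_iter q n (t - s) z y \<partial>count_space (UNIV - {x}))
        \<partial>lborel)"

definition P_min :: "('s \<Rightarrow> 's \<Rightarrow> real) \<Rightarrow> real \<Rightarrow> 's \<Rightarrow> 's \<Rightarrow> ennreal" where
  "P_min q t x y = (SUP n. P_iter q n t x y)"

text \<open>Expected occupation time of y: E_x[ int_0^oo 1{Z_t = y} dt ] = int_0^oo P_t(x,y) dt.\<close>
definition occupation :: "('s \<Rightarrow> 's \<Rightarrow> real) \<Rightarrow> 's \<Rightarrow> 's \<Rightarrow> ennreal" where
  "occupation q x y = (\<integral>\<^sup>+ t \<in> {0..}. P_min q t x y \<partial>lborel)"

text \<open>States: Some i is i \<in> N_0, None is the cemetery dagger.\<close>
definition Zrate :: "nat \<Rightarrow> real \<Rightarrow> nat option \<Rightarrow> nat option \<Rightarrow> real" where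
  "Zrate d \<nu> x y =
     (case x of
        None \<Rightarrow> 0
      | Some i \<Rightarrow>
          (case y of
             None \<Rightarrow> \<nu> * real i
           | Some j \<Rightarrow>
               (if i = 0 \<and> j = 1 then 2
                else if i \<ge> 1 \<and> j = i + 1 then 2 * (real d - 1) / real d
                else if i \<ge> 1 \<and> j + 1 = i then 2 / real d
                else 0)))"

definition R_dnu :: "nat \<Rightarrow> real \<Rightarrow> nat \<Rightarrow> ennreal" where
  "R_dnu d \<nu> i = occupation (Zrate d \<nu>) (Some i) (Some 0)"

end

theory Submission
  imports Defs
begin


lemma P_iter_meas:
  fixes q :: "'s::countable \<Rightarrow> 's \<Rightarrow> real"
  shows "(\<lambda>t. P_iter q n t x y) \<in> borel_measurable borel"
proof (induction n arbitrary: x y)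
  case 0
  then show ?case by simp
next
  case (Suc n)
  define K where "K = (\<lambda>x \<tau>. \<integral>\<^sup>+ z. ennreal (q x z) * P_iter q n \<tau> z y \<partial>count_space (UNIV - {x}))"
  have Km[measurable]: "K x \<in> borel_measurable borel" for x
  proof -
    interpret sigma_finite_measure "count_space (UNIV - {x})"
      by (rule sigma_finite_measure_count_space_countable) simp
    have "(\<lambda>(z, \<tau>). ennreal (q x z) * P_iter q n \<tau> z y) \<in> borel_measurable (count_space (UNIV - {x}) \<Otimes>\<^sub>M borel)"
      by (rule measurable_pair_measure_countable1) (auto intro!: borel_measurable_times_ennreal Suc.IH)
    then have "(\<lambda>(\<tau>, z). ennreal (q x z) * P_iter q n \<tau> z y) \<in> borel_measurable (borel \<Otimes>\<^sub>M count_space (UNIV - {x}))"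
      by (subst measurable_pair_swap_iff) (simp add: case_prod_beta)
    then show ?thesis unfolding K_def by (rule borel_measurable_nn_integral)
  qed
  have ind: "indicator {0..t} s = (if 0 \<le> s \<and> s \<le> t then 1 else (0::ennreal))" for s t :: real
    by (auto simp: indicator_def)
  have "(\<lambda>(t, s). ennreal (exp (- exit_rate q x * s)) * K x (t - s) * indicator {0..t} s) \<in> borel_measurable (borel \<Otimes>\<^sub>M lborel)"
    unfolding split_beta' ind by measurable
  then have "(\<lambda>t. \<integral>\<^sup>+ s. ennreal (exp (- exit_rate q x * s)) * K x (t - s) * indicator {0..t} s \<partial>lborel) \<in> borel_measurable borel"
    by (rule lborel.borel_measurable_nn_integral)
  then show ?case
    by (simp add: K_def)
qed

lemma P_iter_meas'[measurable]:
  fixes q :: "'s::countable \<Rightarrow> 's \<Rightarrow> real"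
  shows "(\<lambda>t. P_iter q n t x y) \<in> borel_measurable lborel"
  using P_iter_meas by (simp add: measurable_lborel1)

lemma K_meas:
  fixes q :: "'s::countable \<Rightarrow> 's \<Rightarrow> real"
  shows "(\<lambda>(\<tau>, z). ennreal (q x z) * P_iter q n \<tau> z y) \<in> borel_measurable (lborel \<Otimes>\<^sub>M count_space (UNIV - {x}))"
proof -
  have "(\<lambda>(z, \<tau>). ennreal (q x z) * P_iter q n \<tau> z y) \<in> borel_measurable (count_space (UNIV - {x}) \<Otimes>\<^sub>M lborel)"
    by (rule measurable_pair_measure_countable1) auto
  then show ?thesis
    by (subst measurable_pair_swap_iff) (simp add: case_prod_beta)
qed

lemma P_iter_mono: "P_iter q n t x y \<le> P_iter q (Suc n) t x y"
proof (induction n arbitrary: t x y)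
  case 0
  then show ?case by simp
next
  case (Suc n)
  show ?case
    unfolding P_iter.simps(2)[of q "Suc n" t x y] P_iter.simps(2)[of q n t x y]
    by (intro add_mono order_refl nn_integral_mono mult_left_mono mult_right_mono Suc.IH) auto
qed

lemma exp_int:
  assumes "a > 0"
  shows "(\<integral>\<^sup>+ s. ennreal (exp (- a * s)) * indicator {0..} s \<partial>lborel) = ennreal (1 / a)"
  using nn_integral_has_integral_lebesgue'[OF _ has_integral_exp_minus_to_infinity[OF assms, of 0]]
  by simp

lemma lap_rec:
  fixes q :: "'s::countable \<Rightarrow> 's \<Rightarrow> real"
  assumes a: "exit_rate q x > 0"
  shows "(\<integral>\<^sup>+ t. P_iter q (Suc n) t x y * indicator {0..} t \<partial>lborel) =
     (if x = y then ennreal (1 / exit_rate q x) else 0) +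
     ennreal (1 / exit_rate q x) * (\<integral>\<^sup>+ z. ennreal (q x z) * (\<integral>\<^sup>+ t. P_iter q n t z y * indicator {0..} t \<partial>lborel) \<partial>count_space (UNIV - {x}))"
proof -
  define a where "a = exit_rate q x"
  define S where "S = UNIV - {x}"
  define K where "K = (\<lambda>\<tau>. \<integral>\<^sup>+ z. ennreal (q x z) * P_iter q n \<tau> z y \<partial>count_space S)"
  interpret S: sigma_finite_measure "count_space S"
    by (rule sigma_finite_measure_count_space_countable) simp
  interpret LS: pair_sigma_finite lborel "count_space S" ..

  have Km2[measurable]: "(\<lambda>(\<tau>, z). ennreal (q x z) * P_iter q n \<tau> z y) \<in> borel_measurable (lborel \<Otimes>\<^sub>M count_space S)"
    unfolding S_def by (rule K_meas)
  have Km[measurable]: "K \<in> borel_measurable borel"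
    unfolding K_def using S.borel_measurable_nn_integral[OF Km2] by (simp add: measurable_lborel1)
  have ind: "indicator {0..t} s = (if 0 \<le> s \<and> s \<le> t then 1 else (0::ennreal))" for s t :: real
    by (auto simp: indicator_def)
  have ind2: "indicator {s..} t = (if s \<le> t then 1 else (0::ennreal))" for s t :: real
    by (auto simp: indicator_def)
  have Km'[measurable]: "K \<in> borel_measurable lborel"
    using Km by (simp add: measurable_lborel1)
  have shift: "(\<integral>\<^sup>+ t. K (t - s) * indicator {s..} t \<partial>lborel) = (\<integral>\<^sup>+ \<tau>. K \<tau> * indicator {0..} \<tau> \<partial>lborel)" for s
  proof -
    have "(\<integral>\<^sup>+ t. K (t - s) * indicator {s..} t \<partial>lborel) = ennreal \<bar>1\<bar> * (\<integral>\<^sup>+ \<tau>. K (s + 1 * \<tau> - s) * indicator {s..} (s + 1 * \<tau>) \<partial>lborel)"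
      by (rule nn_integral_real_affine[where f="\<lambda>t. K (t - s) * indicator {s..} t"]) (unfold ind ind2, measurable)
    then show ?thesis
      by (simp add: indicator_def)
  qed
  have base: "(\<integral>\<^sup>+ t. (if x = y then ennreal (exp (- a * t)) else 0) * indicator {0..} t \<partial>lborel)
      = (if x = y then ennreal (1 / a) else 0)"
    using exp_int[of a] a unfolding a_def by (cases "x = y") auto
  have C: "(\<integral>\<^sup>+ \<tau>. K \<tau> * indicator {0..} \<tau> \<partial>lborel) =
      (\<integral>\<^sup>+ z. ennreal (q x z) * (\<integral>\<^sup>+ t. P_iter q n t z y * indicator {0..} t \<partial>lborel) \<partial>count_space S)"
  proof -
    have "(\<integral>\<^sup>+ \<tau>. K \<tau> * indicator {0..} \<tau> \<partial>lborel) =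
       (\<integral>\<^sup>+ \<tau>. (\<integral>\<^sup>+ z. ennreal (q x z) * P_iter q n \<tau> z y * indicator {0..} \<tau> \<partial>count_space S) \<partial>lborel)"
      unfolding K_def by (intro nn_integral_cong nn_integral_multc[symmetric]) auto
    also have "\<dots> = (\<integral>\<^sup>+ z. (\<integral>\<^sup>+ \<tau>. ennreal (q x z) * P_iter q n \<tau> z y * indicator {0..} \<tau> \<partial>lborel) \<partial>count_space S)"
      by (rule LS.Fubini'[symmetric]) measurable
    also have "\<dots> = (\<integral>\<^sup>+ z. ennreal (q x z) * (\<integral>\<^sup>+ t. P_iter q n t z y * indicator {0..} t \<partial>lborel) \<partial>count_space S)"
      by (intro nn_integral_cong) (simp add: nn_integral_cmult[symmetric] mult.assoc)
    finally show ?thesis .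
  qed
  have D: "(\<integral>\<^sup>+ t. (\<integral>\<^sup>+ s. ennreal (exp (- a * s)) * K (t - s) * indicator {0..t} s \<partial>lborel) * indicator {0..} t \<partial>lborel)
     = ennreal (1 / a) * (\<integral>\<^sup>+ \<tau>. K \<tau> * indicator {0..} \<tau> \<partial>lborel)"
  proof -
    have "(\<integral>\<^sup>+ t. (\<integral>\<^sup>+ s. ennreal (exp (- a * s)) * K (t - s) * indicator {0..t} s \<partial>lborel) * indicator {0..} t \<partial>lborel)
      = (\<integral>\<^sup>+ t. (\<integral>\<^sup>+ s. ennreal (exp (- a * s)) * K (t - s) * indicator {0..t} s * indicator {0..} t \<partial>lborel) \<partial>lborel)"
      by (intro nn_integral_cong nn_integral_multc[symmetric]) (simp add: ind)
    also have "\<dots> = (\<integral>\<^sup>+ s. (\<integral>\<^sup>+ t. ennreal (exp (- a * s)) * K (t - s) * indicator {0..t} s * indicator {0..} t \<partial>lborel) \<partial>lborel)"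
      by (rule lborel_pair.Fubini'[symmetric]) (unfold ind ind2, measurable)
    also have "\<dots> = (\<integral>\<^sup>+ s. ennreal (exp (- a * s)) * indicator {0..} s * (\<integral>\<^sup>+ t. K (t - s) * indicator {s..} t \<partial>lborel) \<partial>lborel)"
    proof (intro nn_integral_cong)
      fix s :: real
      have "(\<integral>\<^sup>+ t. ennreal (exp (- a * s)) * K (t - s) * indicator {0..t} s * indicator {0..} t \<partial>lborel)
          = (\<integral>\<^sup>+ t. (ennreal (exp (- a * s)) * indicator {0..} s) * (K (t - s) * indicator {s..} t) \<partial>lborel)"
        by (intro nn_integral_cong) (auto simp: indicator_def)
      also have "\<dots> = ennreal (exp (- a * s)) * indicator {0..} s * (\<integral>\<^sup>+ t. K (t - s) * indicator {s..} t \<partial>lborel)"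
        by (rule nn_integral_cmult) (unfold ind ind2, measurable)
      finally show "(\<integral>\<^sup>+ t. ennreal (exp (- a * s)) * K (t - s) * indicator {0..t} s * indicator {0..} t \<partial>lborel) = ennreal (exp (- a * s)) * indicator {0..} s * (\<integral>\<^sup>+ t. K (t - s) * indicator {s..} t \<partial>lborel)" .
    qed
    also have "\<dots> = (\<integral>\<^sup>+ s. ennreal (exp (- a * s)) * indicator {0..} s * (\<integral>\<^sup>+ \<tau>. K \<tau> * indicator {0..} \<tau> \<partial>lborel) \<partial>lborel)"
      by (simp add: shift)
    also have "\<dots> = ennreal (1 / a) * (\<integral>\<^sup>+ \<tau>. K \<tau> * indicator {0..} \<tau> \<partial>lborel)"
      using exp_int[of a] a unfolding a_def by (subst nn_integral_multc) auto
    finally show ?thesis .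
  qed
  have "(\<integral>\<^sup>+ t. P_iter q (Suc n) t x y * indicator {0..} t \<partial>lborel) =
     (\<integral>\<^sup>+ t. (if x = y then ennreal (exp (- a * t)) else 0) * indicator {0..} t
       + (\<integral>\<^sup>+ s. ennreal (exp (- a * s)) * K (t - s) * indicator {0..t} s \<partial>lborel) * indicator {0..} t \<partial>lborel)"
    by (intro nn_integral_cong) (simp add: a_def K_def S_def distrib_right)
  also have "\<dots> = (\<integral>\<^sup>+ t. (if x = y then ennreal (exp (- a * t)) else 0) * indicator {0..} t \<partial>lborel)
       + (\<integral>\<^sup>+ t. (\<integral>\<^sup>+ s. ennreal (exp (- a * s)) * K (t - s) * indicator {0..t} s \<partial>lborel) * indicator {0..} t \<partial>lborel)"
  proof (rule nn_integral_add)
    show "(\<lambda>t. (if x = y then ennreal (exp (- a * t)) else 0) * indicator {0..} t) \<in> borel_measurable lborel"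
      by measurable
    have "(\<lambda>(t, s). ennreal (exp (- a * s)) * K (t - s) * indicator {0..t} s) \<in> borel_measurable (lborel \<Otimes>\<^sub>M lborel)"
      unfolding split_beta' ind by measurable
    from lborel.borel_measurable_nn_integral[OF this]
    show "(\<lambda>t. (\<integral>\<^sup>+ s. ennreal (exp (- a * s)) * K (t - s) * indicator {0..t} s \<partial>lborel) * indicator {0..} t) \<in> borel_measurable lborel"
      by measurable
  qed
  also have "\<dots> = (if x = y then ennreal (1 / a) else 0) + ennreal (1 / a) * (\<integral>\<^sup>+ z. ennreal (q x z) * (\<integral>\<^sup>+ t. P_iter q n t z y * indicator {0..} t \<partial>lborel) \<partial>count_space S)"
    using base D C by simp
  finally show ?thesis unfolding a_def S_def .
qed

definition Lp :: "('s \<Rightarrow> 's \<Rightarrow> real) \<Rightarrow> nat \<Rightarrow> 's \<Rightarrow> 's \<Rightarrow> ennreal" where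
  "Lp q n x y = (\<integral>\<^sup>+ t. P_iter q n t x y * indicator {0..} t \<partial>lborel)"

lemma occ_SUP:
  fixes q :: "'s::countable \<Rightarrow> 's \<Rightarrow> real"
  shows "occupation q x y = (SUP n. Lp q n x y)"
proof -
  have "occupation q x y = (\<integral>\<^sup>+ t. (SUP n. P_iter q n t x y * indicator {0..} t) \<partial>lborel)"
    unfolding occupation_def P_min_def by (intro nn_integral_cong) (simp add: SUP_mult_right_ennreal)
  also have "\<dots> = (SUP n. Lp q n x y)"
    unfolding Lp_def
  proof (rule nn_integral_monotone_convergence_SUP)
    show "incseq (\<lambda>n t. P_iter q n t x y * indicator {0..} t)"
      by (rule incseq_SucI) (simp only: le_fun_def, intro allI mult_right_mono P_iter_mono, simp)
  qed simp
  finally show ?thesis .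
qed

lemma Lp_mono: "Lp q n x y \<le> Lp q (Suc n) x y"
  unfolding Lp_def by (intro nn_integral_mono mult_right_mono P_iter_mono) auto

lemma lap0:
  assumes a: "exit_rate q x > 0"
  shows "Lp q 0 x y = (if x = y then ennreal (1 / exit_rate q x) else 0)"
  using exp_int[OF a] unfolding Lp_def by (cases "x = y") auto

lemma lap_rec':
  fixes q :: "'s::countable \<Rightarrow> 's \<Rightarrow> real"
  assumes a: "exit_rate q x > 0"
  shows "Lp q (Suc n) x y = (if x = y then ennreal (1 / exit_rate q x) else 0) +
     ennreal (1 / exit_rate q x) * (\<integral>\<^sup>+ z. ennreal (q x z) * Lp q n z y \<partial>count_space (UNIV - {x}))"
  unfolding Lp_def by (rule lap_rec[OF a])

definition upr :: "nat \<Rightarrow> nat \<Rightarrow> real" where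
  "upr d i = (if i = 0 then 2 else 2 * (real d - 1) / real d)"

lemma Z_sum:
  fixes G :: "nat option \<Rightarrow> ennreal"
  assumes "d \<ge> 3" "\<nu> > 0"
  shows "(\<integral>\<^sup>+ z. ennreal (Zrate d \<nu> (Some i) z) * G z \<partial>count_space (UNIV - {Some i}))
    = ennreal (\<nu> * real i) * G None + ennreal (upr d i) * G (Some (i+1))
      + (if i \<ge> 1 then ennreal (2 / real d) * G (Some (i - 1)) else 0)"
proof (cases i)
  case 0
  have "(\<integral>\<^sup>+ z. ennreal (Zrate d \<nu> (Some i) z) * G z \<partial>count_space (UNIV - {Some i}))
     = (\<Sum>z\<in>{None, Some 1}. ennreal (Zrate d \<nu> (Some i) z) * G z)"
    by (rule nn_integral_count_space') (auto simp: Zrate_def 0 split: option.splits)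
  then show ?thesis by (simp add: 0 Zrate_def upr_def)
next
  case (Suc m)
  have "(\<integral>\<^sup>+ z. ennreal (Zrate d \<nu> (Some i) z) * G z \<partial>count_space (UNIV - {Some i}))
     = (\<Sum>z\<in>{None, Some (i+1), Some m}. ennreal (Zrate d \<nu> (Some i) z) * G z)"
    by (rule nn_integral_count_space') (auto simp: Zrate_def Suc split: option.splits)
  then show ?thesis by (simp add: Suc Zrate_def upr_def add.commute add.left_commute)
qed

lemma Z_exit:
  assumes "d \<ge> 3" "\<nu> > 0"
  shows "exit_rate (Zrate d \<nu>) (Some i) = 2 + \<nu> * real i"
proof -
  have "(\<integral>\<^sup>+ z. ennreal (Zrate d \<nu> (Some i) z) \<partial>count_space (UNIV - {Some i}))
    = ennreal (\<nu> * real i) + ennreal (upr d i) + (if i \<ge> 1 then ennreal (2 / real d) else 0)"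
    using Z_sum[OF assms, of i "\<lambda>_. 1"] by simp
  also have "\<dots> = ennreal (2 + \<nu> * real i)"
  proof (cases "i = 0")
    case True then show ?thesis by (simp add: upr_def)
  next
    case False
    have e: "\<nu> * real i + 2 * (real d - 1) / real d + 2 / real d = 2 + \<nu> * real i"
      using assms by (simp add: field_simps)
    have "ennreal (\<nu> * real i) + ennreal (2 * (real d - 1) / real d) + ennreal (2 / real d)
       = ennreal (\<nu> * real i + 2 * (real d - 1) / real d + 2 / real d)"
      using assms by (simp add: ennreal_plus)
    then show ?thesis using False by (simp only: upr_def e if_False) simp
  qed
  finally have "(\<integral>\<^sup>+ z. ennreal (Zrate d \<nu> (Some i) z) \<partial>count_space (UNIV - {Some i})) = ennreal (2 + \<nu> * real i)" .
  then show ?thesis unfolding exit_rate_def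
    by (simp only:) (rule enn2real_ennreal, use assms in simp)
qed

lemma Z_None: "P_iter (Zrate d \<nu>) n t None (Some 0) = 0"
  by (cases n) (simp_all add: Zrate_def)

lemma cf_props:
  fixes a :: "nat \<Rightarrow> real" and B :: real
  assumes B: "B > 0" and a: "\<And>k. a k \<ge> B + 1 / B"
  shows "0 \<le> cf_trunc a k n \<and> cf_trunc a k n \<le> cf_trunc a k (Suc n) \<and> cf_trunc a k (Suc n) \<le> 1 / B"
proof (induction n arbitrary: k)
  case 0
  have "a k \<ge> B" using a[of k] B by (smt (verit) divide_pos_pos)
  then have "1 / a k \<le> 1 / B" using B by (intro divide_left_mono) auto
  moreover have "0 \<le> 1 / a k" using \<open>a k \<ge> B\<close> B by simp
  ultimately show ?case by simp
next
  case (Suc n)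
  let ?x = "cf_trunc a (Suc k) n" and ?y = "cf_trunc a (Suc k) (Suc n)"
  from Suc.IH[of "Suc k"] have h: "0 \<le> ?x" "?x \<le> ?y" "?y \<le> 1 / B" by auto
  have d1: "a k - ?y \<ge> B" using a[of k] h by linarith
  have d2: "a k - ?x \<ge> a k - ?y" using h by linarith
  have "0 \<le> 1 / (a k - ?x)" using d1 d2 B by simp
  moreover have "1 / (a k - ?x) \<le> 1 / (a k - ?y)"
    using d1 d2 B by (intro divide_left_mono) auto
  moreover have "1 / (a k - ?y) \<le> 1 / B"
    using d1 B by (intro divide_left_mono) auto
  ultimately show ?case by simp
qed

lemma cf_limit:
  fixes a :: "nat \<Rightarrow> real" and B :: real
  assumes B: "B > 0" and a: "\<And>k. a k \<ge> B + 1 / B"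
  defines "r \<equiv> (\<lambda>k. lim (\<lambda>n. cf_trunc a k n))"
  shows "(\<lambda>n. cf_trunc a k n) \<longlonglongrightarrow> r k" and "0 \<le> r k" and "r k \<le> 1 / B"
    and "r k = 1 / (a k - r (Suc k))" and "r k > 0"
proof -
  have conv: "(\<lambda>n. cf_trunc a k n) \<longlonglongrightarrow> r k" for k
  proof -
    have "incseq (\<lambda>n. cf_trunc a k n)"
      by (rule incseq_SucI) (use cf_props[of B a, OF B a] in \<open>simp only:\<close>)
    moreover have "bdd_above (range (\<lambda>n. cf_trunc a k n))"
    proof (rule bdd_aboveI2)
      fix n show "cf_trunc a k n \<le> 1 / B"
        using cf_props[of B a k n, OF B a] by linarith
    qed
    ultimately have "convergent (\<lambda>n. cf_trunc a k n)"
      using LIMSEQ_incseq_SUP convergent_def by blast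
    then show ?thesis unfolding r_def by (simp add: convergent_LIMSEQ_iff)
  qed
  show "(\<lambda>n. cf_trunc a k n) \<longlonglongrightarrow> r k" by (rule conv)
  have lo: "0 \<le> r k" for k
    by (rule LIMSEQ_le_const[OF conv]) (use cf_props[of B a, OF B a] in blast)
  have hi: "r k \<le> 1 / B" for k
    by (rule LIMSEQ_le_const2[OF conv]) (use cf_props[of B a, OF B a] in \<open>meson order_trans\<close>)
  show "0 \<le> r k" "r k \<le> 1 / B" by (rule lo, rule hi)
  have den: "a k - r (Suc k) \<ge> B" using a[of k] hi[of "Suc k"] by linarith
  have "(\<lambda>n. cf_trunc a k (Suc n)) \<longlonglongrightarrow> r k"
    using conv[of k] by (rule LIMSEQ_Suc)
  moreover have "(\<lambda>n. cf_trunc a k (Suc n)) \<longlonglongrightarrow> 1 / (a k - r (Suc k))"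
    unfolding cf_trunc.simps using den B
    by (intro tendsto_intros conv) auto
  ultimately show eq: "r k = 1 / (a k - r (Suc k))" by (rule LIMSEQ_unique)
  show "r k > 0" using den B by (subst eq) simp
qed

definition aa :: "nat \<Rightarrow> real \<Rightarrow> nat \<Rightarrow> real" where
  "aa d \<nu> k = (2 + real k * \<nu>) / rho_d d"

definition rr :: "nat \<Rightarrow> real \<Rightarrow> nat \<Rightarrow> real" where
  "rr d \<nu> k = lim (\<lambda>n. cf_trunc (aa d \<nu>) k n)"

definition hh :: "nat \<Rightarrow> real \<Rightarrow> nat \<Rightarrow> real" where
  "hh d \<nu> i = 1 / (2 * vartheta d \<nu>) * (1 / beta_d d) ^ i * (\<Prod>k\<in>{1..i}. rr d \<nu> k)"

lemma beta_facts:
  assumes "d \<ge> 3"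
  shows "(beta_d d)\<^sup>2 = real d - 1" "beta_d d > 1" "rho_d d = 2 * beta_d d / real d"
proof -
  show "(beta_d d)\<^sup>2 = real d - 1" using assms by (simp add: beta_d_def)
  have "sqrt (real d - 1) > sqrt 1" using assms by (subst real_sqrt_less_iff) simp
  then show "beta_d d > 1" by (simp add: beta_d_def)
  show "rho_d d = 2 * beta_d d / real d" by (simp add: beta_d_def rho_d_def)
qed

lemma aa_ge:
  assumes "d \<ge> 3" "\<nu> > 0"
  shows "aa d \<nu> k \<ge> beta_d d + 1 / beta_d d"
proof -
  define B where "B = beta_d d"
  have B2: "B\<^sup>2 = real d - 1" and B1: "B > 1" and rho: "rho_d d = 2 * B / real d"
    using beta_facts[OF assms(1)] by (auto simp: B_def)
  have dB: "real d = B\<^sup>2 + 1" using B2 by simp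
  have "aa d \<nu> k = (2 + real k * \<nu>) * real d / (2 * B)"
    unfolding aa_def rho by (simp add: divide_divide_eq_right)
  also have "\<dots> \<ge> 2 * real d / (2 * B)"
    using B1 assms by (intro divide_right_mono mult_right_mono) auto
  also have "2 * real d / (2 * B) = B + 1 / B"
    unfolding dB using B1 by (simp add: field_simps power2_eq_square)
  finally show ?thesis unfolding B_def .
qed

lemma rr_facts:
  assumes "d \<ge> 3" "\<nu> > 0"
  shows "0 < rr d \<nu> k" "rr d \<nu> k \<le> 1 / beta_d d"
    "rr d \<nu> k = 1 / (aa d \<nu> k - rr d \<nu> (Suc k))"
    "Delta d \<nu> = rr d \<nu> 1"
proof -
  have B: "beta_d d > 0" using beta_facts[OF assms(1)] by simp
  note L = cf_limit[of "beta_d d" "aa d \<nu>", OF B aa_ge[OF assms], folded rr_def]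
  show "0 < rr d \<nu> k" "rr d \<nu> k \<le> 1 / beta_d d" "rr d \<nu> k = 1 / (aa d \<nu> k - rr d \<nu> (Suc k))"
    by (rule L(5), rule L(3), rule L(4))
  show "Delta d \<nu> = rr d \<nu> 1"
    unfolding Delta_def rr_def aa_def ..
qed


lemma vartheta_pos:
  assumes "d \<ge> 3" "\<nu> > 0"
  shows "vartheta d \<nu> > 0" "vartheta d \<nu> = 1 - rr d \<nu> 1 / beta_d d"
proof -
  have B1: "beta_d d > 1" using beta_facts[OF assms(1)] by simp
  have r: "rr d \<nu> 1 \<le> 1 / beta_d d" using rr_facts(2)[OF assms] by simp
  also have "\<dots> < beta_d d" using B1 by (simp add: field_simps) (smt (verit) mult_less_cancel_left1)
  finally have rl: "rr d \<nu> 1 < beta_d d" .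
  show eq: "vartheta d \<nu> = 1 - rr d \<nu> 1 / beta_d d"
    unfolding vartheta_def rr_facts(4)[OF assms] ..
  have "rr d \<nu> 1 / beta_d d < 1" using rl B1 by simp
  then show "vartheta d \<nu> > 0" by (simp add: eq)
qed

lemma hh_eq:
  assumes "d \<ge> 3" "\<nu> > 0"
  shows "hh d \<nu> i = (if i = 0 then 1 else 0) / (2 + \<nu> * real i)
     + 1 / (2 + \<nu> * real i) * (upr d i * hh d \<nu> (i+1) + (if i \<ge> 1 then 2 / real d * hh d \<nu> (i-1) else 0))"
proof -
  define B where "B = beta_d d"
  define C where "C = 1 / (2 * vartheta d \<nu>)"
  define r where "r = rr d \<nu>"
  have B2: "B\<^sup>2 = real d - 1" and B1: "B > 1" and rho: "rho_d d = 2 * B / real d"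
    using beta_facts[OF assms(1)] by (auto simp: B_def)
  have th: "vartheta d \<nu> > 0" "vartheta d \<nu> = 1 - r 1 / B"
    using vartheta_pos[OF assms] by (auto simp: r_def B_def)
  have d0: "real d > 0" using assms by simp
  have hh: "hh d \<nu> i = C * (1 / B) ^ i * (\<Prod>k\<in>{1..i}. r k)" for i
    unfolding hh_def C_def B_def r_def ..
  show ?thesis
  proof (cases i)
    case 0
    have e0: "hh d \<nu> 0 = C" "hh d \<nu> 1 = C * (1 / B) * r 1" by (simp_all add: hh)
    have "1 / 2 + 1 / 2 * (2 * (C * (1 / B) * r 1)) = C"
      unfolding C_def th(2) using th B1 by (simp add: field_simps)
    then have "hh d \<nu> 0 = 1 / 2 + 1 / 2 * (2 * hh d \<nu> 1)" unfolding e0 by simp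
    then show ?thesis using 0 by (simp add: upr_def)
  next
    case (Suc m)
    define P where "P = C * (1 / B) ^ m * (\<Prod>k\<in>{1..m}. r k)"
    have h0: "hh d \<nu> m = P" unfolding hh P_def ..
    have h1: "hh d \<nu> (Suc m) = P * (1 / B) * r (Suc m)"
      unfolding hh P_def by (simp add: prod.nat_ivl_Suc' mult_ac)
    have h2: "hh d \<nu> (Suc (Suc m)) = P * (1 / B) ^ 2 * r (Suc m) * r (Suc (Suc m))"
      unfolding hh P_def by (simp add: prod.nat_ivl_Suc' mult_ac power2_eq_square)
    define q where "q = 2 + \<nu> * real (Suc m)"
    have q0: "q > 0" unfolding q_def using assms by (simp add: add_pos_nonneg)
    have req: "r (Suc m) = 1 / (aa d \<nu> (Suc m) - r (Suc (Suc m)))"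
      unfolding r_def by (rule rr_facts(3)[OF assms])
    have aq: "aa d \<nu> (Suc m) = q * real d / (2 * B)"
      unfolding aa_def rho q_def by (simp add: divide_divide_eq_right mult.commute)
    have den: "aa d \<nu> (Suc m) - r (Suc (Suc m)) \<noteq> 0"
      using rr_facts(1)[OF assms, of "Suc m"] req by (auto simp: r_def)
    have key: "r (Suc m) * (q * real d / (2 * B)) = 1 + r (Suc m) * r (Suc (Suc m))"
      using req den unfolding aq by (simp add: field_simps)
    have key2: "q * r (Suc m) / B = 2 / real d * (r (Suc m) * r (Suc (Suc m)) + 1)"
      using key d0 B1 by (simp add: field_simps)
    have up: "upr d (Suc m) = 2 * B\<^sup>2 / real d" unfolding upr_def B2 by simp
    have "P * (1 / B) * r (Suc m) = 1 / q * (2 * B\<^sup>2 / real d * (P * (1 / B) ^ 2 * r (Suc m) * r (Suc (Suc m))) + 2 / real d * P)"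
    proof -
      have "P * (1 / B) * r (Suc m) = 1 / q * (P * (q * r (Suc m) / B))" using q0 by simp
      also have "\<dots> = 1 / q * (P * (2 / real d * (r (Suc m) * r (Suc (Suc m)) + 1)))" by (simp only: key2)
      also have "\<dots> = 1 / q * (2 * B\<^sup>2 / real d * (P * (1 / B) ^ 2 * r (Suc m) * r (Suc (Suc m))) + 2 / real d * P)"
        using B1 q0 d0 by (simp add: field_simps power2_eq_square)
      finally show ?thesis .
    qed
    then show ?thesis using Suc h0 h1 h2 up by (simp add: q_def)
  qed
qed


definition dn :: "nat \<Rightarrow> nat \<Rightarrow> real" where
  "dn d i = (if i \<ge> 1 then 2 / real d else 0)"

definition Tz :: "nat \<Rightarrow> real \<Rightarrow> (nat \<Rightarrow> ennreal) \<Rightarrow> nat \<Rightarrow> ennreal" where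
  "Tz d \<nu> g i = ennreal (if i = 0 then 1 / 2 else 0) + ennreal (1 / (2 + \<nu> * real i)) *
     (ennreal (upr d i) * g (Suc i) + ennreal (dn d i) * g (i - 1))"

definition LL :: "nat \<Rightarrow> real \<Rightarrow> nat \<Rightarrow> nat \<Rightarrow> ennreal" where
  "LL d \<nu> n i = Lp (Zrate d \<nu>) n (Some i) (Some 0)"

lemma LL_0:
  assumes "d \<ge> 3" "\<nu> > 0"
  shows "LL d \<nu> 0 i = Tz d \<nu> (\<lambda>_. 0) i"
proof -
  have "exit_rate (Zrate d \<nu>) (Some i) > 0" using Z_exit[OF assms] assms by (simp add: add_pos_nonneg)
  from lap0[OF this, of "Some 0"] show ?thesis
    unfolding LL_def Tz_def using Z_exit[OF assms] by simp
qed

lemma LL_Suc: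
  assumes "d \<ge> 3" "\<nu> > 0"
  shows "LL d \<nu> (Suc n) i = Tz d \<nu> (LL d \<nu> n) i"
proof -
  have "exit_rate (Zrate d \<nu>) (Some i) > 0" using Z_exit[OF assms] assms by (simp add: add_pos_nonneg)
  note R = lap_rec'[OF this, of n "Some 0"]
  have N: "Lp (Zrate d \<nu>) n None (Some 0) = 0" unfolding Lp_def by (simp add: Z_None)
  have dn: "(if i \<ge> 1 then ennreal (2 / real d) * G else 0) = ennreal (dn d i) * G" for G
    by (simp add: dn_def)
  show ?thesis
    unfolding LL_def Tz_def R Z_sum[OF assms] Z_exit[OF assms] N dn
    by (simp add: LL_def)
qed

lemma Tz_mono:
  assumes "\<And>j. g j \<le> g' j"
  shows "Tz d \<nu> g i \<le> Tz d \<nu> g' i"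
  unfolding Tz_def by (intro add_mono order_refl mult_left_mono assms) auto

lemma hh_pos:
  assumes "d \<ge> 3" "\<nu> > 0"
  shows "hh d \<nu> i > 0"
  unfolding hh_def using vartheta_pos[OF assms] rr_facts(1)[OF assms] beta_facts[OF assms(1)]
  by (intro mult_pos_pos prod_pos divide_pos_pos zero_less_power) auto

lemma hh_bound:
  assumes "d \<ge> 3" "\<nu> > 0"
  shows "beta_d d ^ i * hh d \<nu> i \<le> 1 / (2 * vartheta d \<nu>) * (1 / beta_d d) ^ i"
proof -
  have B1: "beta_d d > 1" using beta_facts[OF assms(1)] by simp
  have "(\<Prod>k\<in>{1..i}. rr d \<nu> k) \<le> (\<Prod>k\<in>{1..i}. 1 / beta_d d)"
    using rr_facts(1,2)[OF assms] by (intro prod_mono) (auto intro: less_imp_le)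
  also have "\<dots> = (1 / beta_d d) ^ i" by simp
  finally have p: "(\<Prod>k\<in>{1..i}. rr d \<nu> k) \<le> (1 / beta_d d) ^ i" .
  have "beta_d d ^ i * hh d \<nu> i = 1 / (2 * vartheta d \<nu>) * (\<Prod>k\<in>{1..i}. rr d \<nu> k)"
    unfolding hh_def using B1 by (simp add: power_one_over field_simps)
  also have "\<dots> \<le> 1 / (2 * vartheta d \<nu>) * (1 / beta_d d) ^ i"
    using p vartheta_pos[OF assms] by (intro mult_left_mono) auto
  finally show ?thesis .
qed

lemma hh_eq':
  assumes "d \<ge> 3" "\<nu> > 0"
  shows "hh d \<nu> i = (if i = 0 then 1 / 2 else 0) + 1 / (2 + \<nu> * real i) * (upr d i * hh d \<nu> (Suc i) + dn d i * hh d \<nu> (i - 1))"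
  using hh_eq[OF assms, of i] by (cases i) (auto simp: dn_def)

lemma enn_expand:
  fixes x y a p b q :: real
  assumes "0 \<le> x" "0 \<le> y" "0 \<le> a" "0 \<le> p" "0 \<le> b" "0 \<le> q"
  shows "ennreal (x + y * (a * p + b * q)) = ennreal x + ennreal y * (ennreal a * ennreal p + ennreal b * ennreal q)"
proof -
  have "ennreal (x + y * (a * p + b * q)) = ennreal x + ennreal (y * (a * p + b * q))"
    using assms by (intro ennreal_plus) auto
  also have "ennreal (y * (a * p + b * q)) = ennreal y * ennreal (a * p + b * q)"
    using assms by (intro ennreal_mult) auto
  also have "ennreal (a * p + b * q) = ennreal (a * p) + ennreal (b * q)"
    using assms by (intro ennreal_plus) auto
  also have "ennreal (a * p) = ennreal a * ennreal p" using assms by (intro ennreal_mult) auto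
  also have "ennreal (b * q) = ennreal b * ennreal q" using assms by (intro ennreal_mult) auto
  finally show ?thesis .
qed

lemma Tz_hh:
  assumes "d \<ge> 3" "\<nu> > 0"
  shows "Tz d \<nu> (\<lambda>j. ennreal (hh d \<nu> j)) i = ennreal (hh d \<nu> i)"
proof -
  have nn: "0 \<le> upr d i" "0 \<le> dn d i" "0 \<le> 1 / (2 + \<nu> * real i)" "0 \<le> hh d \<nu> j" for j
    using assms hh_pos[OF assms, of j] by (auto simp: upr_def dn_def)
  show ?thesis
  proof -
    have "ennreal (hh d \<nu> i) = ennreal ((if i = 0 then 1 / 2 else 0) + 1 / (2 + \<nu> * real i) * (upr d i * hh d \<nu> (Suc i) + dn d i * hh d \<nu> (i - 1)))"
      using hh_eq'[OF assms, of i] by (rule arg_cong)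
    also have "\<dots> = Tz d \<nu> (\<lambda>j. ennreal (hh d \<nu> j)) i"
      unfolding Tz_def by (rule enn_expand) (use assms in \<open>auto simp: nn\<close>)
    finally show ?thesis ..
  qed
qed

lemma LL_le_hh:
  assumes "d \<ge> 3" "\<nu> > 0"
  shows "LL d \<nu> n i \<le> ennreal (hh d \<nu> i)"
proof (induction n arbitrary: i)
  case 0
  have "Tz d \<nu> (\<lambda>_. 0) i \<le> Tz d \<nu> (\<lambda>j. ennreal (hh d \<nu> j)) i" by (rule Tz_mono) simp
  then show ?case by (simp add: LL_0[OF assms] Tz_hh[OF assms])
next
  case (Suc n)
  have "Tz d \<nu> (LL d \<nu> n) i \<le> Tz d \<nu> (\<lambda>j. ennreal (hh d \<nu> j)) i" by (rule Tz_mono) (rule Suc.IH)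
  then show ?case by (simp add: LL_Suc[OF assms] Tz_hh[OF assms])
qed


lemma Tz_SUP:
  assumes inc: "\<And>j. incseq (\<lambda>n. X n j)"
  shows "Tz d \<nu> (\<lambda>j. SUP n. X n j) i = (SUP n. Tz d \<nu> (X n) i)"
proof -
  define c where "c = ennreal (if i = 0 then 1 / 2 else 0)"
  define b where "b = ennreal (1 / (2 + \<nu> * real i))"
  define u where "u = ennreal (upr d i)"
  define v where "v = ennreal (dn d i)"
  have "Tz d \<nu> (\<lambda>j. SUP n. X n j) i = c + b * ((SUP n. u * X n (Suc i)) + (SUP n. v * X n (i - 1)))"
    unfolding Tz_def c_def b_def u_def v_def by (simp add: SUP_mult_left_ennreal)
  also have "(SUP n. u * X n (Suc i)) + (SUP n. v * X n (i - 1)) = (SUP n. u * X n (Suc i) + v * X n (i - 1))"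
  proof (rule ennreal_SUP_add[symmetric])
    show "incseq (\<lambda>n. u * X n (Suc i))" using inc[of "Suc i"] by (auto simp: incseq_def intro: mult_left_mono)
    show "incseq (\<lambda>n. v * X n (i - 1))" using inc[of "i - 1"] by (auto simp: incseq_def intro: mult_left_mono)
  qed
  also have "c + b * (SUP n. u * X n (Suc i) + v * X n (i - 1)) = c + (SUP n. b * (u * X n (Suc i) + v * X n (i - 1)))"
    by (simp add: SUP_mult_left_ennreal)
  also have "\<dots> = (SUP n. c + b * (u * X n (Suc i) + v * X n (i - 1)))"
    by (rule ennreal_SUP_add_right) simp
  also have "\<dots> = (SUP n. Tz d \<nu> (X n) i)"
    unfolding Tz_def c_def b_def u_def v_def ..
  finally show ?thesis .
qed

lemma step_alg:
  fixes B d q eI em e2 :: real and m :: nat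
  assumes B: "B > 1" and dB: "d = B\<^sup>2 + 1" and q: "q \<ge> 2"
    and nn: "eI \<ge> 0" "em \<ge> 0" "e2 \<ge> 0"
    and ineq: "eI \<le> 1 / q * (2 * B\<^sup>2 / d * e2 + 2 / d * em)"
    and IH: "B ^ m * em \<le> B ^ Suc m * eI"
  shows "B ^ Suc m * eI \<le> B ^ Suc (Suc m) * e2"
proof -
  have "B\<^sup>2 \<ge> 0" by simp
  then have d0: "d > 0" using dB by linarith
  have q0: "q > 0" using q by simp
  have "q * eI \<le> 2 * B\<^sup>2 / d * e2 + 2 / d * em" using ineq q0 by (simp add: field_simps)
  then have "q * d * eI \<le> 2 * B\<^sup>2 * e2 + 2 * em" using d0 by (simp add: field_simps)
  moreover have "q * d * eI \<ge> 2 * d * eI" using q nn d0 by (intro mult_right_mono) auto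
  moreover have "2 * d * eI \<ge> 4 * B * eI"
  proof -
    have "(B - 1)\<^sup>2 \<ge> 0" by simp
    moreover have "(B - 1)\<^sup>2 = B\<^sup>2 - 2 * B + 1" by (simp add: power2_diff)
    ultimately have "d \<ge> 2 * B" using dB by linarith
    then have "(2 * B) * eI \<le> d * eI" using nn by (intro mult_right_mono) auto
    then show ?thesis by linarith
  qed
  ultimately have k: "2 * B * eI \<le> B\<^sup>2 * e2 + em" by linarith
  have P: "B ^ m > 0" using B by simp
  have "2 * B * eI * B ^ m \<le> (B\<^sup>2 * e2 + em) * B ^ m" using k P by (intro mult_right_mono) auto
  then have "2 * (B ^ Suc m * eI) \<le> B ^ Suc (Suc m) * e2 + B ^ m * em"
    by (simp add: algebra_simps power2_eq_square)
  with IH show ?thesis by linarith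
qed

lemma lower:
  assumes dn3: "d \<ge> 3" and nu: "\<nu> > 0"
    and F0: "\<And>i. 0 \<le> F i" and Fh: "\<And>i. F i \<le> hh d \<nu> i"
    and Fs: "\<And>i. (if i = 0 then 1 / 2 else 0) + 1 / (2 + \<nu> * real i) * (upr d i * F (Suc i) + dn d i * F (i - 1)) \<le> F i"
  shows "F 0 = hh d \<nu> 0"
proof -
  note assms' = dn3 nu
  define B where "B = beta_d d"
  have B2: "B\<^sup>2 = real d - 1" and B1: "B > 1"
    using beta_facts[OF dn3] by (auto simp: B_def)
  define e where "e i = hh d \<nu> i - F i" for i
  have e0: "e i \<ge> 0" for i using Fh[of i] by (simp add: e_def)
  have E: "e i \<le> 1 / (2 + \<nu> * real i) * (upr d i * e (Suc i) + dn d i * e (i - 1))" for i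
  proof -
    have alg: "b * (u * (H1 - G1) + v * (H0 - G0)) = b * (u * H1 + v * H0) - b * (u * G1 + v * G0)" for b u v H1 G1 H0 G0 :: real
      by (simp add: algebra_simps)
    show ?thesis
      unfolding e_def alg using hh_eq'[OF assms', of i] Fs[of i] by linarith
  qed
  have V: "B ^ i * e i \<le> B ^ Suc i * e (Suc i)" for i
  proof (induction i)
    case 0
    have "e 0 \<le> e 1" using E[of 0] by (simp add: upr_def dn_def)
    also have "e 1 \<le> B * e 1" using B1 e0[of 1] by (simp add: mult_le_cancel_right1)
    finally show ?case by simp
  next
    case (Suc m)
    show ?case
    proof (rule step_alg[OF B1 _ _ e0 e0 e0 _ Suc.IH])
      show "real d = B\<^sup>2 + 1" using B2 by simp
      show "2 \<le> 2 + \<nu> * real (Suc m)" using nu by simp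
      show "e (Suc m) \<le> 1 / (2 + \<nu> * real (Suc m)) * (2 * B\<^sup>2 / real d * e (Suc (Suc m)) + 2 / real d * e m)"
        using E[of "Suc m"] B2 by (simp add: upr_def dn_def)
    qed
  qed
  have inc: "incseq (\<lambda>i. B ^ i * e i)" by (rule incseq_SucI) (rule V)
  define C where "C = 1 / (2 * vartheta d \<nu>)"
  have bnd: "e 0 \<le> C * (1 / B) ^ i" for i
  proof -
    have "e 0 \<le> B ^ i * e i" using incseqD[OF inc, of 0 i] by simp
    also have "\<dots> \<le> B ^ i * hh d \<nu> i" using F0[of i] B1 by (simp add: e_def)
    also have "\<dots> \<le> C * (1 / B) ^ i" using hh_bound[OF assms'] unfolding C_def B_def .
    finally show ?thesis .
  qed
  have "(\<lambda>i. C * (1 / B) ^ i) \<longlonglongrightarrow> C * 0"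
    using B1 by (intro tendsto_mult tendsto_const LIMSEQ_power_zero) auto
  then have "e 0 \<le> 0" using bnd by (intro LIMSEQ_le_const) auto
  with e0[of 0] show ?thesis by (simp add: e_def)
qed


theorem proposition4p1:
  fixes d :: nat and \<nu> :: real
  assumes "d \<ge> 3" and "\<nu> > 0"
  shows "R_dnu d \<nu> 0 = ennreal (1 / (2 * vartheta d \<nu>))"
proof -
  define f where "f i = (SUP n. LL d \<nu> n i)" for i
  have inc: "incseq (\<lambda>n. LL d \<nu> n j)" for j
    by (rule incseq_SucI) (simp add: LL_def Lp_mono)
  have fh: "f i \<le> ennreal (hh d \<nu> i)" for i
    unfolding f_def by (rule SUP_least) (rule LL_le_hh[OF assms])
  define F where "F i = enn2real (f i)" for i
  have fF: "f i = ennreal (F i)" for i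
  proof -
    have "f i < top" using fh[of i] by (simp add: le_less_trans)
    then show ?thesis by (simp add: F_def)
  qed
  have F0: "0 \<le> F i" for i by (simp add: F_def)
  have Fh: "F i \<le> hh d \<nu> i" for i
    using fh[of i] hh_pos[OF assms, of i] unfolding fF by simp
  have Tf: "Tz d \<nu> f i \<le> f i" for i
  proof -
    have "Tz d \<nu> f i = (SUP n. Tz d \<nu> (LL d \<nu> n) i)"
      unfolding f_def by (rule Tz_SUP) (rule inc)
    also have "\<dots> = (SUP n. LL d \<nu> (Suc n) i)" by (simp add: LL_Suc[OF assms])
    also have "\<dots> \<le> f i" unfolding f_def by (intro SUP_least SUP_upper) auto
    finally show ?thesis .
  qed
  have Fs: "(if i = 0 then 1 / 2 else 0) + 1 / (2 + \<nu> * real i) * (upr d i * F (Suc i) + dn d i * F (i - 1)) \<le> F i" for i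
  proof -
    have nn: "0 \<le> upr d i" "0 \<le> dn d i" "0 \<le> 1 / (2 + \<nu> * real i)"
      using assms by (auto simp: upr_def dn_def)
    have "ennreal ((if i = 0 then 1 / 2 else 0) + 1 / (2 + \<nu> * real i) * (upr d i * F (Suc i) + dn d i * F (i - 1)))
        = Tz d \<nu> f i"
      unfolding Tz_def fF by (rule enn_expand) (use assms in \<open>auto simp: nn F0\<close>)
    also have "\<dots> \<le> ennreal (F i)" using Tf[of i] by (simp add: fF)
    finally show ?thesis using F0[of i] by simp
  qed
  have "F 0 = hh d \<nu> 0" by (rule lower[OF assms F0 Fh Fs])
  have "R_dnu d \<nu> 0 = f 0"
    unfolding R_dnu_def occ_SUP f_def LL_def ..
  also have "\<dots> = ennreal (hh d \<nu> 0)" by (simp add: fF \<open>F 0 = hh d \<nu> 0\<close>)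
  also have "\<dots> = ennreal (1 / (2 * vartheta d \<nu>))" by (simp add: hh_def)
  finally show ?thesis .
qed

end
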